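(* Assume Assumptions A and B. If the solution $S$ of (IVP) exists on $[r_0,\infty)$, then there is $R>r_0$ such that $S$ is monotone on $(R,\infty)$; consequently $s_\infty:=\lim_{r\to\infty}S(r)$ exists (and lies in $[0,1]$).
   Context: Fix an integer $n\ge2$. For $i=1,2$, $g_i(s)=a^{(i)}_0+a^{(i)}_1s^{\alpha^{(i)}_1}+\dots+a^{(i)}_{N_i}s^{\alpha^{(i)}_{N_i}}$ ($s\ge0$) with $N_i\ge0$, $a^{(i)}_0>0$, $a^{(i)}_j\ge0$, real $0<\alpha^{(i)}_1<\dots<\alpha^{(i)}_{N_i}$; $G_i(u)=g_i(|u|)u$ for $u\in\mathbb R$. Assumption A: $f_1,f_2\in C([0,1])\cap C^1((0,1))$, $f_1(0)=0$, $f_2(1)=0$, $f_1'>0$, $f_2'<0$ on $(0,1)$. Assumption B: $p_c'\in C^1((0,1))$, $p_c'>0$ on $(0,1)$. $F_i(S)=1/(p_c'(S)f_i(S))$. Given $r_0>0$, $c_1,c_2\in\mathbb R$, $s_0\in(0,1)$, (IVP) is: $S'(r)=G_2(c_2r^{1-n})F_2(S)-G_1(c_1r^{1-n})F_1(S)$ for $r>r_0$, $S(r_0)=s_0$, $0<S(r)<1$. *)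

theory Defs
  imports "HOL-Analysis.Analysis"
begin

definition gpow :: "nat \<Rightarrow> (nat \<Rightarrow> real) \<Rightarrow> (nat \<Rightarrow> real) \<Rightarrow> real \<Rightarrow> real" where
  "gpow N a \<alpha> s = a 0 + (\<Sum>j=1..N. a j * s powr \<alpha> j)"

definition admissible_g :: "nat \<Rightarrow> (nat \<Rightarrow> real) \<Rightarrow> (nat \<Rightarrow> real) \<Rightarrow> bool" where
  "admissible_g N a \<alpha> \<longleftrightarrow> a 0 > 0 \<and> (\<forall>j\<in>{1..N}. a j \<ge> 0)
     \<and> (N \<ge> 1 \<longrightarrow> \<alpha> 1 > 0) \<and> (\<forall>j\<in>{1..N}. \<forall>k\<in>{1..N}. j < k \<longrightarrow> \<alpha> j < \<alpha> k)"

definition Gfun :: "nat \<Rightarrow> (nat \<Rightarrow> real) \<Rightarrow> (nat \<Rightarrow> real) \<Rightarrow> real \<Rightarrow> real" where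
  "Gfun N a \<alpha> u = gpow N a \<alpha> \<bar>u\<bar> * u"

definition C1_on_01 :: "(real \<Rightarrow> real) \<Rightarrow> (real \<Rightarrow> real) \<Rightarrow> bool" where
  "C1_on_01 f f' \<longleftrightarrow> (\<forall>x\<in>{0<..<1}. (f has_real_derivative f' x) (at x))
     \<and> continuous_on {0<..<1} f'"

text \<open>F_i(S) = 1 / (p_c'(S) f_i(S)).\<close>
definition Ffun :: "(real \<Rightarrow> real) \<Rightarrow> (real \<Rightarrow> real) \<Rightarrow> real \<Rightarrow> real" where
  "Ffun dpc f s = 1 / (dpc s * f s)"

end

theory Submission
  imports Defs
begin

lemma powr_sum_sign:
  fixes c e :: "'a \<Rightarrow> real"
  assumes "finite I"
  shows "(\<forall>\<^sub>F u in at_right 0. (\<Sum>i\<in>I. c i * u powr e i) > 0) \<or>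
         (\<forall>\<^sub>F u in at_right 0. (\<Sum>i\<in>I. c i * u powr e i) < 0) \<or>
         (\<forall>\<^sub>F u in at_right 0. (\<Sum>i\<in>I. c i * u powr e i) = 0)"
  using assms
proof (induction "card (e ` I)" arbitrary: I rule: less_induct)
  case less
  show ?case
  proof (cases "I = {}")
    case True then show ?thesis by simp
  next
    case False
    define m where "m = Min (e ` I)"
    define J where "J = {i\<in>I. e i = m}"
    define K where "K = {i\<in>I. e i \<noteq> m}"
    define C where "C = (\<Sum>i\<in>J. c i)"
    have finJ: "finite J" and finK: "finite K" using less.prems by (auto simp: J_def K_def)
    have IJK: "I = J \<union> K" "J \<inter> K = {}" by (auto simp: J_def K_def)
    have m_in: "m \<in> e ` I" using False less.prems by (simp add: m_def)
    have m_le: "\<forall>i\<in>I. m \<le> e i" using less.prems by (simp add: m_def)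
    have Kgt: "\<forall>i\<in>K. e i > m" using m_le by (auto simp: K_def less_le)
    have split: "(\<Sum>i\<in>I. c i * u powr e i) = C * u powr m + (\<Sum>i\<in>K. c i * u powr e i)" for u
    proof -
      have "(\<Sum>i\<in>I. c i * u powr e i) = (\<Sum>i\<in>J. c i * u powr e i) + (\<Sum>i\<in>K. c i * u powr e i)"
        using IJK finJ finK by (simp add: sum.union_disjoint)
      moreover have "(\<Sum>i\<in>J. c i * u powr e i) = C * u powr m"
        by (simp add: C_def J_def sum_distrib_right)
      ultimately show ?thesis by simp
    qed
    have ev0: "\<forall>\<^sub>F u in at_right (0::real). 0 < u" by (rule eventually_at_right_less)
    show ?thesis
    proof (cases "C = 0")
      case True
      have "m \<notin> e ` K" using Kgt by force
      moreover have "e ` K \<subseteq> e ` I" using IJK by auto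
      ultimately have "e ` K \<subset> e ` I" using m_in by blast
      then have card: "card (e ` K) < card (e ` I)"
        using less.prems by (intro psubset_card_mono) auto
      have eq: "(\<Sum>i\<in>I. c i * u powr e i) = (\<Sum>i\<in>K. c i * u powr e i)" for u
        using split True by simp
      show ?thesis using less.hyps[OF card finK] unfolding eq .
    next
      case False
      have lim: "((\<lambda>u. C + (\<Sum>i\<in>K. c i * u powr (e i - m))) \<longlongrightarrow> C + 0) (at_right 0)"
      proof (intro tendsto_add tendsto_const tendsto_null_sum)
        fix i assume "i \<in> K"
        then have "e i - m > 0" using Kgt by auto
        then have "((\<lambda>u. u powr (e i - m)) \<longlongrightarrow> 0) (at_right (0::real))"
          by (intro tendsto_zero_powrI[where b="e i - m"])
             (auto intro: tendsto_ident_at eventually_mono[OF ev0])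
        then show "((\<lambda>u. c i * u powr (e i - m)) \<longlongrightarrow> 0) (at_right 0)"
          using tendsto_mult_right_zero by blast
      qed
      have fact: "(\<Sum>i\<in>I. c i * u powr e i) = u powr m * (C + (\<Sum>i\<in>K. c i * u powr (e i - m)))"
        if "u > 0" for u
      proof -
        have "(\<Sum>i\<in>K. c i * u powr e i) = u powr m * (\<Sum>i\<in>K. c i * u powr (e i - m))"
          using that by (simp add: sum_distrib_left powr_diff field_simps)
        then show ?thesis using split[of u] by (simp add: algebra_simps)
      qed
      show ?thesis
      proof (cases "C > 0")
        case True
        have "\<forall>\<^sub>F u in at_right 0. C + (\<Sum>i\<in>K. c i * u powr (e i - m)) > 0"
          using order_tendstoD(1)[OF lim, of 0] True by simp
        then have "\<forall>\<^sub>F u in at_right 0. (\<Sum>i\<in>I. c i * u powr e i) > 0"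
          using ev0 by eventually_elim (simp add: fact)
        then show ?thesis by blast
      next
        case F: False
        then have "C < 0" using False by simp
        have "\<forall>\<^sub>F u in at_right 0. C + (\<Sum>i\<in>K. c i * u powr (e i - m)) < 0"
          using order_tendstoD(2)[OF lim, of 0] \<open>C < 0\<close> by simp
        then have "\<forall>\<^sub>F u in at_right 0. (\<Sum>i\<in>I. c i * u powr e i) < 0"
          using ev0 by eventually_elim (simp add: fact mult_pos_neg)
        then show ?thesis by blast
      qed
    qed
  qed
qed

lemma powsum_deriv:
  fixes p e :: "nat \<Rightarrow> real"
  assumes "u > 0"
  shows "((\<lambda>u. \<Sum>j\<in>A. p j * u powr e j) has_real_derivative
          (\<Sum>j\<in>A. p j * (e j * u powr (e j - 1)))) (at u)"
  using assms by (intro DERIV_sum DERIV_cmult has_real_derivative_powr)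

lemma ratio_eventually_mono:
  fixes p q e d :: "nat \<Rightarrow> real"
  assumes finA: "finite A" and finB: "finite B"
    and Qpos: "\<forall>u>0. (\<Sum>k\<in>B. q k * u powr d k) > 0"
  shows "\<exists>b>0. mono_on {0<..<b} (\<lambda>u. (\<Sum>j\<in>A. p j * u powr e j) / (\<Sum>k\<in>B. q k * u powr d k))
            \<or> antimono_on {0<..<b} (\<lambda>u. (\<Sum>j\<in>A. p j * u powr e j) / (\<Sum>k\<in>B. q k * u powr d k))"
proof -
  define P where "P = (\<lambda>u::real. \<Sum>j\<in>A. p j * u powr e j)"
  define Q where "Q = (\<lambda>u::real. \<Sum>k\<in>B. q k * u powr d k)"
  define P' where "P' = (\<lambda>u::real. \<Sum>j\<in>A. p j * (e j * u powr (e j - 1)))"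
  define Q' where "Q' = (\<lambda>u::real. \<Sum>k\<in>B. q k * (d k * u powr (d k - 1)))"
  define c where "c = (\<lambda>(j,k). p j * q k * (e j - d k))"
  define ex where "ex = (\<lambda>(j,k). e j + d k - 1)"
  have dP: "(P has_real_derivative P' u) (at u)" if "u > 0" for u
    unfolding P_def P'_def using that by (rule powsum_deriv)
  have dQ: "(Q has_real_derivative Q' u) (at u)" if "u > 0" for u
    unfolding Q_def Q'_def using that by (rule powsum_deriv)
  have Qp: "Q u > 0" if "u > 0" for u using Qpos that by (simp add: Q_def)
  have N: "P' u * Q u - P u * Q' u = (\<Sum>x\<in>A \<times> B. c x * u powr ex x)" if "u > 0" for u
  proof -
    have "P' u * Q u - P u * Q' u = (\<Sum>j\<in>A. \<Sum>k\<in>B. p j * (e j * u powr (e j - 1)) * (q k * u powr d k)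
         - p j * u powr e j * (q k * (d k * u powr (d k - 1))))"
      unfolding P_def Q_def P'_def Q'_def sum_product sum_subtractf[symmetric] by simp
    also have "\<dots> = (\<Sum>j\<in>A. \<Sum>k\<in>B. c (j,k) * u powr ex (j,k))"
    proof (intro sum.cong refl)
      fix j k
      have "u powr (e j + d k - 1) = u powr (e j - 1 + d k)"
        by (simp add: algebra_simps)
      also have "\<dots> = u powr (e j - 1) * u powr d k"
        by (rule powr_add)
      finally have "u powr (e j + d k - 1) = u powr (e j - 1) * u powr d k" .
      moreover have "u powr (e j + d k - 1) = u powr e j * u powr (d k - 1)"
        by (simp add: powr_add[symmetric] algebra_simps)
      ultimately show "p j * (e j * u powr (e j - 1)) * (q k * u powr d k)
         - p j * u powr e j * (q k * (d k * u powr (d k - 1))) = c (j,k) * u powr ex (j,k)"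
        by (simp add: c_def ex_def algebra_simps)
    qed
    also have "\<dots> = (\<Sum>x\<in>A \<times> B. c x * u powr ex x)"
      by (simp add: sum.cartesian_product)
    finally show ?thesis .
  qed
  have dR: "((\<lambda>u. P u / Q u) has_real_derivative (P' u * Q u - P u * Q' u) / (Q u * Q u)) (at u)"
    if "u > 0" for u
    using dP[OF that] dQ[OF that] Qp[OF that] by (intro DERIV_divide) auto
  have contR: "continuous_on {x..y} (\<lambda>u. P u / Q u)" if "x > 0" for x y
  proof (intro continuous_at_imp_continuous_on ballI)
    fix t assume "t \<in> {x..y}"
    then have "t > 0" using that by auto
    then show "isCont (\<lambda>u. P u / Q u) t" using dR DERIV_isCont by blast
  qed
  have fin: "finite (A \<times> B)" using finA finB by simp
  from powr_sum_sign[OF fin, of c ex]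
  have "(\<forall>\<^sub>F u in at_right 0. (\<Sum>x\<in>A \<times> B. c x * u powr ex x) \<ge> 0) \<or>
        (\<forall>\<^sub>F u in at_right 0. (\<Sum>x\<in>A \<times> B. c x * u powr ex x) \<le> 0)"
  proof (elim disjE)
    assume "\<forall>\<^sub>F u in at_right 0. (\<Sum>x\<in>A \<times> B. c x * u powr ex x) > 0"
    then show ?thesis by (intro disjI1) (auto elim: eventually_mono)
  next
    assume "\<forall>\<^sub>F u in at_right 0. (\<Sum>x\<in>A \<times> B. c x * u powr ex x) < 0"
    then show ?thesis by (intro disjI2) (auto elim: eventually_mono)
  next
    assume "\<forall>\<^sub>F u in at_right 0. (\<Sum>x\<in>A \<times> B. c x * u powr ex x) = 0"
    then show ?thesis by (intro disjI2) (auto elim: eventually_mono)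
  qed
  then show ?thesis
  proof
    assume "\<forall>\<^sub>F u in at_right 0. (\<Sum>x\<in>A \<times> B. c x * u powr ex x) \<ge> 0"
    then obtain b where b: "b > 0" "\<forall>u>0. u < b \<longrightarrow> (\<Sum>x\<in>A \<times> B. c x * u powr ex x) \<ge> 0"
      unfolding eventually_at_right_field by auto
    have "mono_on {0<..<b} (\<lambda>u. P u / Q u)"
    proof (rule mono_onI)
      fix x y assume xy: "x \<in> {0<..<b}" "y \<in> {0<..<b}" "x \<le> y"
      show "P x / Q x \<le> P y / Q y"
      proof (rule DERIV_nonneg_imp_increasing_open[OF xy(3)])
        fix t assume t: "x < t" "t < y"
        then have "t > 0" "t < b" using xy by auto
        then show "\<exists>z. ((\<lambda>u. P u / Q u) has_real_derivative z) (at t) \<and> z \<ge> 0"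
          using dR[of t] N[of t] b(2) Qp[of t] by (intro exI[of _ "(P' t * Q t - P t * Q' t) / (Q t * Q t)"]) auto
      next
        show "continuous_on {x..y} (\<lambda>u. P u / Q u)" using xy by (intro contR) auto
      qed
    qed
    then show ?thesis using b(1) unfolding P_def Q_def by blast
  next
    assume "\<forall>\<^sub>F u in at_right 0. (\<Sum>x\<in>A \<times> B. c x * u powr ex x) \<le> 0"
    then obtain b where b: "b > 0" "\<forall>u>0. u < b \<longrightarrow> (\<Sum>x\<in>A \<times> B. c x * u powr ex x) \<le> 0"
      unfolding eventually_at_right_field by auto
    have "antimono_on {0<..<b} (\<lambda>u. P u / Q u)"
    proof (rule monotone_onI)
      fix x y assume xy: "x \<in> {0<..<b}" "y \<in> {0<..<b}" "x \<le> y"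
      show "P x / Q x \<ge> P y / Q y"
      proof (rule DERIV_nonpos_imp_decreasing_open[OF xy(3)])
        fix t assume t: "x < t" "t < y"
        then have "t > 0" "t < b" using xy by auto
        then show "\<exists>z. ((\<lambda>u. P u / Q u) has_real_derivative z) (at t) \<and> z \<le> 0"
          using dR[of t] N[of t] b(2) Qp[of t]
          by (intro exI[of _ "(P' t * Q t - P t * Q' t) / (Q t * Q t)"]) (auto simp: divide_nonpos_pos)
      next
        show "continuous_on {x..y} (\<lambda>u. P u / Q u)" using xy by (intro contR) auto
      qed
    qed
    then show ?thesis using b(1) unfolding P_def Q_def by blast
  qed
qed


lemma first_hit:
  fixes h :: "real \<Rightarrow> real"
  assumes "continuous_on {a..b} h" "a \<le> b" "h b \<ge> 0"
  shows "\<exists>c\<in>{a..b}. h c \<ge> 0 \<and> (\<forall>t\<in>{a..<c}. h t < 0)"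
proof -
  define Z where "Z = {a..b} \<inter> h -` {0..}"
  have "closed Z" unfolding Z_def using assms(1) by (intro continuous_closed_preimage) auto
  then have "compact (Z \<inter> {a..b})" by (intro closed_Int_compact) auto
  moreover have "Z \<inter> {a..b} = Z" by (auto simp: Z_def)
  ultimately have "compact Z" by simp
  moreover have "Z \<noteq> {}" using assms by (auto simp: Z_def intro!: exI[of _ b])
  ultimately obtain c where c: "c \<in> Z" "\<forall>y\<in>Z. c \<le> y" using compact_attains_inf by blast
  show ?thesis
  proof (intro bexI conjI ballI)
    show "c \<in> {a..b}" "h c \<ge> 0" using c(1) by (auto simp: Z_def)
    fix t assume t: "t \<in> {a..<c}"
    show "h t < 0"
    proof (rule ccontr)
      assume "\<not> h t < 0"
      then have "t \<in> Z" using t \<open>c \<in> {a..b}\<close> by (auto simp: Z_def)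
      then show False using c(2) t by force
    qed
  qed
qed

lemma last_hit:
  fixes h :: "real \<Rightarrow> real"
  assumes "continuous_on {a..b} h" "a \<le> b" "h a \<ge> 0"
  shows "\<exists>c\<in>{a..b}. h c \<ge> 0 \<and> (\<forall>t\<in>{c<..b}. h t < 0)"
proof -
  define Z where "Z = {a..b} \<inter> h -` {0..}"
  have "closed Z" unfolding Z_def using assms(1) by (intro continuous_closed_preimage) auto
  then have "compact (Z \<inter> {a..b})" by (intro closed_Int_compact) auto
  moreover have "Z \<inter> {a..b} = Z" by (auto simp: Z_def)
  ultimately have "compact Z" by simp
  moreover have "Z \<noteq> {}" using assms by (auto simp: Z_def intro!: exI[of _ a])
  ultimately obtain c where c: "c \<in> Z" "\<forall>y\<in>Z. y \<le> c" using compact_attains_sup by blast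
  show ?thesis
  proof (intro bexI conjI ballI)
    show "c \<in> {a..b}" "h c \<ge> 0" using c(1) by (auto simp: Z_def)
    fix t assume t: "t \<in> {c<..b}"
    show "h t < 0"
    proof (rule ccontr)
      assume "\<not> h t < 0"
      then have "t \<in> Z" using t \<open>c \<in> {a..b}\<close> by (auto simp: Z_def)
      then show False using c(2) t by force
    qed
  qed
qed

lemma cont_from_deriv:
  assumes "\<forall>t>R. (S has_real_derivative S' t) (at t)" "R < x"
  shows "continuous_on {x..y} S"
proof (intro continuous_at_imp_continuous_on ballI)
  fix t assume "t \<in> {x..y}"
  then have "t > R" using assms(2) by auto
  then show "isCont S t" using assms(1) DERIV_isCont by blast
qed

lemma strict_inc_deriv:
  assumes "\<forall>t>R. (S has_real_derivative S' t) (at t)" "R < x" "x < y"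
    "\<forall>t. x < t \<and> t < y \<longrightarrow> S' t > 0"
  shows "S x < S y"
proof (rule DERIV_pos_imp_increasing_open[OF assms(3)])
  fix t assume "x < t" "t < y"
  then show "\<exists>z. (S has_real_derivative z) (at t) \<and> z > 0"
    using assms by (intro exI[of _ "S' t"]) auto
qed (rule cont_from_deriv[OF assms(1,2)])

lemma strict_dec_deriv:
  assumes "\<forall>t>R. (S has_real_derivative S' t) (at t)" "R < x" "x < y"
    "\<forall>t. x < t \<and> t < y \<longrightarrow> S' t < 0"
  shows "S x > S y"
proof (rule DERIV_neg_imp_decreasing_open[OF assms(3)])
  fix t assume "x < t" "t < y"
  then show "\<exists>z. (S has_real_derivative z) (at t) \<and> z < 0"
    using assms by (intro exI[of _ "S' t"]) auto
qed (rule cont_from_deriv[OF assms(1,2)])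

lemma mono_deriv:
  assumes "\<forall>t>R. (S has_real_derivative S' t) (at t)" "\<forall>t>R. S' t \<ge> 0"
  shows "mono_on {R<..} S"
proof (rule mono_onI)
  fix x y assume "x \<in> {R<..}" "y \<in> {R<..}" "x \<le> y"
  then show "S x \<le> S y"
  proof (intro DERIV_nonneg_imp_increasing_open[OF \<open>x \<le> y\<close>])
    fix t assume "x < t" "t < y"
    then show "\<exists>z. (S has_real_derivative z) (at t) \<and> z \<ge> 0"
      using assms \<open>x \<in> {R<..}\<close> by (intro exI[of _ "S' t"]) auto
  qed (use assms cont_from_deriv[OF assms(1)] in auto)
qed

lemma antimono_deriv:
  assumes "\<forall>t>R. (S has_real_derivative S' t) (at t)" "\<forall>t>R. S' t \<le> 0"
  shows "antimono_on {R<..} S"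
proof (rule monotone_onI)
  fix x y assume "x \<in> {R<..}" "y \<in> {R<..}" "x \<le> y"
  then show "S x \<ge> S y"
  proof (intro DERIV_nonpos_imp_decreasing_open[OF \<open>x \<le> y\<close>])
    fix t assume "x < t" "t < y"
    then show "\<exists>z. (S has_real_derivative z) (at t) \<and> z \<le> 0"
      using assms \<open>x \<in> {R<..}\<close> by (intro exI[of _ "S' t"]) auto
  qed (use assms cont_from_deriv[OF assms(1)] in auto)
qed

lemma dyn:
  fixes S S' \<phi> \<psi> :: "real \<Rightarrow> real"
  assumes deriv: "\<forall>r>R. (S has_real_derivative S' r) (at r)"
    and phi: "strict_mono_on D \<phi>" and SD: "\<forall>r>R. S r \<in> D"
    and hc: "continuous_on {R<..} (\<lambda>r. \<phi> (S r) - \<psi> r)"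
    and psi: "mono_on {R<..} \<psi> \<or> antimono_on {R<..} \<psi>"
    and sg: "\<forall>r>R. sgn (S' r) = \<sigma> * sgn (\<phi> (S r) - \<psi> r)"
    and sig: "\<sigma> = 1 \<or> \<sigma> = -1"
  shows "\<exists>R'>R. mono_on {R'<..} S \<or> antimono_on {R'<..} S"
proof -
  define h where "h = (\<lambda>r. \<phi> (S r) - \<psi> r)"
  have hcI: "continuous_on {a..b} h" if "R < a" for a b
    unfolding h_def by (rule continuous_on_subset[OF hc]) (use that in auto)
  have hcI': "continuous_on {a..b} (\<lambda>r. - h r)" if "R < a" for a b
    using hcI[OF that] by (intro continuous_intros)
  have phi_less: "\<phi> (S x) < \<phi> (S y)" if "S x < S y" "x > R" "y > R" for x y
    using phi SD that by (auto intro: strict_mono_onD)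
  have mono_sub: "\<exists>R'>R. mono_on {R'<..} S" if "mono_on {R1<..} S" "R1 \<ge> R" for R1
    using that by (intro exI[of _ "R1 + 1"]) (auto intro: monotone_on_subset)
  have anti_sub: "\<exists>R'>R. antimono_on {R'<..} S" if "antimono_on {R1<..} S" "R1 \<ge> R" for R1
    using that by (intro exI[of _ "R1 + 1"]) (auto intro: monotone_on_subset)
  from sig show ?thesis
  proof
    assume s1: "\<sigma> = 1"
    have e: "sgn (S' r) = sgn (h r)" if "r > R" for r using sg that s1 by (simp add: h_def)
    have pos: "S' r > 0 \<longleftrightarrow> h r > 0" and neg: "S' r < 0 \<longleftrightarrow> h r < 0" if "r > R" for r
      using e[OF that] sgn_greater[of "S' r"] sgn_greater[of "h r"] sgn_less[of "S' r"] sgn_less[of "h r"]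
      by auto
    from psi show ?thesis
    proof
      assume pm: "mono_on {R<..} \<psi>"
      show ?thesis
      proof (cases "\<forall>r>R. h r \<ge> 0")
        case True
        have "\<forall>t>R. S' t \<ge> 0"
        proof (intro allI impI)
          fix t assume tt: "t > R"
          then have "t > R" using tt by auto
          then show "S' t \<ge> 0" using neg[of t] True[rule_format, OF tt] by linarith
        qed
        then show ?thesis using mono_sub[OF mono_deriv[OF deriv]] by auto
      next
        case False
        then obtain r1 where r1: "r1 > R" "h r1 < 0" by auto
        have stay: "h r < 0" if r1r: "r > r1" for r
        proof (rule ccontr)
          assume "\<not> h r < 0"
          then obtain c where c: "c \<in> {r1..r}" "h c \<ge> 0" "\<forall>t\<in>{r1..<c}. h t < 0"
            using first_hit[OF hcI[OF r1(1)], of r] r1r by auto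
          have "c > r1" using c r1 by (cases "c = r1") auto
          have "S c < S r1"
            using c r1 \<open>c > r1\<close> neg by (intro strict_dec_deriv[OF deriv r1(1) \<open>c > r1\<close>]) auto
          then have "\<phi> (S c) < \<phi> (S r1)" using phi_less r1 \<open>c > r1\<close> by auto
          moreover have "\<psi> r1 \<le> \<psi> c" using pm r1 \<open>c > r1\<close> by (auto intro: mono_onD)
          ultimately have "h c < h r1" unfolding h_def by auto
          then show False using c r1 by auto
        qed
        have "\<forall>t>r1. S' t \<le> 0"
        proof (intro allI impI)
          fix t assume tt: "t > r1"
          then have "t > R" using r1 tt by auto
          then show "S' t \<le> 0" using neg[of t] stay[OF tt] by linarith
        qed
        then have "antimono_on {r1<..} S" using deriv r1 by (intro antimono_deriv) auto
        then show ?thesis using anti_sub r1 by auto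
      qed
    next
      assume pm: "antimono_on {R<..} \<psi>"
      show ?thesis
      proof (cases "\<forall>r>R. h r \<le> 0")
        case True
        have "\<forall>t>R. S' t \<le> 0"
        proof (intro allI impI)
          fix t assume tt: "t > R"
          then have "t > R" using tt by auto
          then show "S' t \<le> 0" using pos[of t] True[rule_format, OF tt] by linarith
        qed
        then show ?thesis using anti_sub[OF antimono_deriv[OF deriv]] by auto
      next
        case False
        then obtain r1 where r1: "r1 > R" "h r1 > 0" by auto
        have stay: "h r > 0" if r1r: "r > r1" for r
        proof (rule ccontr)
          assume "\<not> h r > 0"
          then obtain c where c: "c \<in> {r1..r}" "- h c \<ge> 0" "\<forall>t\<in>{r1..<c}. - h t < 0"
            using first_hit[OF hcI'[OF r1(1)], of r] r1r by auto
          have "c > r1" using c r1 by (cases "c = r1") auto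
          have "S c > S r1"
            using c r1 \<open>c > r1\<close> pos by (intro strict_inc_deriv[OF deriv r1(1) \<open>c > r1\<close>]) auto
          then have "\<phi> (S c) > \<phi> (S r1)" using phi_less r1 \<open>c > r1\<close> by auto
          moreover have "\<psi> r1 \<ge> \<psi> c" using monotone_onD[OF pm, of r1 c] r1 \<open>c > r1\<close> by auto
          ultimately have "h c > h r1" unfolding h_def by auto
          then show False using c r1 by auto
        qed
        have "\<forall>t>r1. S' t \<ge> 0"
        proof (intro allI impI)
          fix t assume tt: "t > r1"
          then have "t > R" using r1 tt by auto
          then show "S' t \<ge> 0" using pos[of t] stay[OF tt] by linarith
        qed
        then have "mono_on {r1<..} S" using deriv r1 by (intro mono_deriv) auto
        then show ?thesis using mono_sub r1 by auto
      qed
    qed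
  next
    assume s1: "\<sigma> = -1"
    have e: "sgn (S' r) = - sgn (h r)" if "r > R" for r using sg that s1 by (simp add: h_def)
    have pos: "S' r > 0 \<longleftrightarrow> h r < 0" and neg: "S' r < 0 \<longleftrightarrow> h r > 0" if "r > R" for r
      using e[OF that] sgn_greater[of "S' r"] sgn_greater[of "h r"] sgn_less[of "S' r"] sgn_less[of "h r"]
      by auto
    from psi show ?thesis
    proof
      assume pm: "mono_on {R<..} \<psi>"
      show ?thesis
      proof (cases "\<forall>r>R. h r > 0")
        case True
        have "\<forall>t>R. S' t \<le> 0"
        proof (intro allI impI)
          fix t assume tt: "t > R"
          then have "t > R" using tt by auto
          then show "S' t \<le> 0" using neg[of t] True[rule_format, OF tt] by linarith
        qed
        then show ?thesis using anti_sub[OF antimono_deriv[OF deriv]] by auto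
      next
        case False
        then obtain r1 where r1: "r1 > R" "h r1 \<le> 0" by auto
        have stay: "h r \<le> 0" if r1r: "r > r1" for r
        proof (rule ccontr)
          assume "\<not> h r \<le> 0"
          then obtain c where c: "c \<in> {r1..r}" "- h c \<ge> 0" "\<forall>t\<in>{c<..r}. - h t < 0"
            using last_hit[OF hcI'[OF r1(1)], of r] r1r r1 by auto
          have "c < r" using c \<open>\<not> h r \<le> 0\<close> by (cases "c = r") auto
          have "c > R" using c r1 by auto
          have "S r < S c"
            using c \<open>c < r\<close> neg \<open>c > R\<close> by (intro strict_dec_deriv[OF deriv \<open>c > R\<close> \<open>c < r\<close>]) auto
          then have "\<phi> (S r) < \<phi> (S c)" using phi_less \<open>c > R\<close> \<open>c < r\<close> by auto
          moreover have "\<psi> c \<le> \<psi> r" using pm \<open>c > R\<close> \<open>c < r\<close> by (auto intro: mono_onD)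
          ultimately have "h r < h c" unfolding h_def by auto
          then show False using c \<open>\<not> h r \<le> 0\<close> by auto
        qed
        have "\<forall>t>r1. S' t \<ge> 0"
        proof (intro allI impI)
          fix t assume "t > r1"
          then have "h t \<le> 0" "t > R" using stay r1 by auto
          then show "S' t \<ge> 0" using neg[of t] by linarith
        qed
        then have "mono_on {r1<..} S" using deriv r1 by (intro mono_deriv) auto
        then show ?thesis using mono_sub r1 by auto
      qed
    next
      assume pm: "antimono_on {R<..} \<psi>"
      show ?thesis
      proof (cases "\<forall>r>R. h r < 0")
        case True
        have "\<forall>t>R. S' t \<ge> 0"
        proof (intro allI impI)
          fix t assume tt: "t > R"
          then have "t > R" using tt by auto
          then show "S' t \<ge> 0" using pos[of t] True[rule_format, OF tt] by linarith
        qed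
        then show ?thesis using mono_sub[OF mono_deriv[OF deriv]] by auto
      next
        case False
        then obtain r1 where r1: "r1 > R" "h r1 \<ge> 0" by (auto simp: not_less)
        have stay: "h r \<ge> 0" if r1r: "r > r1" for r
        proof (rule ccontr)
          assume "\<not> h r \<ge> 0"
          then obtain c where c: "c \<in> {r1..r}" "h c \<ge> 0" "\<forall>t\<in>{c<..r}. h t < 0"
            using last_hit[OF hcI[OF r1(1)], of r] r1r r1 by auto
          have "c < r" using c \<open>\<not> h r \<ge> 0\<close> by (cases "c = r") auto
          have "c > R" using c r1 by auto
          have "S r > S c"
            using c \<open>c < r\<close> pos \<open>c > R\<close> by (intro strict_inc_deriv[OF deriv \<open>c > R\<close> \<open>c < r\<close>]) auto
          then have "\<phi> (S r) > \<phi> (S c)" using phi_less \<open>c > R\<close> \<open>c < r\<close> by auto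
          moreover have "\<psi> c \<ge> \<psi> r" using monotone_onD[OF pm, of c r] \<open>c > R\<close> \<open>c < r\<close> by auto
          ultimately have "h r > h c" unfolding h_def by auto
          then show False using c \<open>\<not> h r \<ge> 0\<close> by auto
        qed
        have "\<forall>t>r1. S' t \<le> 0"
        proof (intro allI impI)
          fix t assume "t > r1"
          then have "h t \<ge> 0" "t > R" using stay r1 by auto
          then show "S' t \<le> 0" using pos[of t] by linarith
        qed
        then have "antimono_on {r1<..} S" using deriv r1 by (intro antimono_deriv) auto
        then show ?thesis using anti_sub r1 by auto
      qed
    qed
  qed
qed


lemma mono_lim:
  fixes S :: "real \<Rightarrow> real"
  assumes m: "mono_on {R<..} S" and b: "\<forall>r>R. 0 \<le> S r \<and> S r \<le> 1"
  shows "\<exists>L\<in>{0..1}. (S \<longlongrightarrow> L) at_top"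
proof -
  define X where "X = S ` {R<..}"
  define L where "L = Sup X"
  have ne: "X \<noteq> {}" by (auto simp: X_def intro!: exI[of _ "R+1"])
  have bdd: "bdd_above X" using b by (auto simp: X_def bdd_above_def intro!: exI[of _ 1])
  have up: "S r \<le> L" if "r > R" for r
    unfolding L_def using bdd that by (intro cSup_upper) (auto simp: X_def)
  have "(S \<longlongrightarrow> L) at_top"
  proof (rule order_tendstoI)
    fix a assume "a < L"
    then obtain x where x: "x \<in> X" "a < x" using less_cSup_iff[OF ne bdd] by (auto simp: L_def)
    then obtain r where r: "r > R" "x = S r" by (auto simp: X_def)
    have "S t > a" if "t \<ge> r" for t
      using monotone_onD[OF m, of r t] r that x by auto
    then show "\<forall>\<^sub>F t in at_top. a < S t" unfolding eventually_at_top_linorder by blast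
  next
    fix a assume "a > L"
    have "S t < a" if "t \<ge> R + 1" for t using up[of t] that \<open>a > L\<close> by auto
    then show "\<forall>\<^sub>F t in at_top. S t < a" unfolding eventually_at_top_linorder by blast
  qed
  moreover have "L \<ge> 0"
  proof -
    have "S (R+1) \<le> L" using up by simp
    moreover have "0 \<le> S (R+1)" using b by simp
    ultimately show ?thesis by linarith
  qed
  moreover have "L \<le> 1" unfolding L_def using ne b by (intro cSup_least) (auto simp: X_def)
  ultimately show ?thesis by auto
qed

lemma antimono_lim:
  fixes S :: "real \<Rightarrow> real"
  assumes m: "antimono_on {R<..} S" and b: "\<forall>r>R. 0 \<le> S r \<and> S r \<le> 1"
  shows "\<exists>L\<in>{0..1}. (S \<longlongrightarrow> L) at_top"
proof -
  have "mono_on {R<..} (\<lambda>r. 1 - S r)"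
    by (rule mono_onI) (use monotone_onD[OF m] in auto)
  from mono_lim[OF this] b obtain L where L: "L \<in> {0..1}" "((\<lambda>r. 1 - S r) \<longlongrightarrow> L) at_top" by auto
  have "((\<lambda>r. 1 - (1 - S r)) \<longlongrightarrow> 1 - L) at_top" by (intro tendsto_intros L(2))
  then show ?thesis using L(1) by (intro bexI[of _ "1 - L"]) auto
qed

lemma gpow_pos:
  assumes "admissible_g N a \<alpha>" "s \<ge> 0"
  shows "gpow N a \<alpha> s > 0"
proof -
  have "(\<Sum>j=1..N. a j * s powr \<alpha> j) \<ge> 0"
    using assms by (intro sum_nonneg) (auto simp: admissible_g_def)
  then show ?thesis using assms by (simp add: gpow_def admissible_g_def)
qed

lemma gpow_sum:
  assumes "k > 0" "v > 0"
  shows "gpow N a \<alpha> (k * v) = (\<Sum>j\<in>{0..N}. (if j=0 then a 0 else a j * k powr \<alpha> j) * v powr (if j = 0 then 0 else \<alpha> j))"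
proof -
  have "{0..N} = insert 0 {1..N}" by auto
  then have "(\<Sum>j\<in>{0..N}. (if j=0 then a 0 else a j * k powr \<alpha> j) * v powr (if j = 0 then 0 else \<alpha> j))
     = a 0 + (\<Sum>j\<in>{1..N}. (if j=0 then a 0 else a j * k powr \<alpha> j) * v powr (if j = 0 then 0 else \<alpha> j))"
    using assms by simp
  also have "(\<Sum>j\<in>{1..N}. (if j=0 then a 0 else a j * k powr \<alpha> j) * v powr (if j = 0 then 0 else \<alpha> j))
      = (\<Sum>j=1..N. a j * (k * v) powr \<alpha> j)"
    by (intro sum.cong refl) (auto simp: powr_mult)
  finally show ?thesis by (simp add: gpow_def)
qed

lemma f_inc:
  fixes f f' :: "real \<Rightarrow> real"
  assumes "continuous_on {0..1} f" "\<forall>x\<in>{0<..<1}. (f has_real_derivative f' x) (at x)"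
    "\<forall>x\<in>{0<..<1}. f' x > 0" "0 \<le> x" "x < y" "y \<le> 1"
  shows "f x < f y"
proof (rule DERIV_pos_imp_increasing_open[OF assms(5)])
  fix t assume "x < t" "t < y"
  then show "\<exists>z. (f has_real_derivative z) (at t) \<and> z > 0"
    using assms by (intro exI[of _ "f' t"]) auto
next
  show "continuous_on {x..y} f" using assms(1) by (rule continuous_on_subset) (use assms in auto)
qed

lemma f_dec:
  fixes f f' :: "real \<Rightarrow> real"
  assumes "continuous_on {0..1} f" "\<forall>x\<in>{0<..<1}. (f has_real_derivative f' x) (at x)"
    "\<forall>x\<in>{0<..<1}. f' x < 0" "0 \<le> x" "x < y" "y \<le> 1"
  shows "f x > f y"
proof (rule DERIV_neg_imp_decreasing_open[OF assms(5)])
  fix t assume "x < t" "t < y"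
  then show "\<exists>z. (f has_real_derivative z) (at t) \<and> z < 0"
    using assms by (intro exI[of _ "f' t"]) auto
next
  show "continuous_on {x..y} f" using assms(1) by (rule continuous_on_subset) (use assms in auto)
qed


theorem theorem2p3:
  fixes n N1 N2 :: nat
    and a1 a2 \<alpha>1 \<alpha>2 :: "nat \<Rightarrow> real"
    and f1 f2 f1' f2' dpc dpc' :: "real \<Rightarrow> real"
    and r0 c1 c2 s0 :: real
    and S :: "real \<Rightarrow> real"
  assumes n: "n \<ge> 2"
    and g1: "admissible_g N1 a1 \<alpha>1" and g2: "admissible_g N2 a2 \<alpha>2"
    \<comment> \<open>Assumption A\<close>
    and f1c: "continuous_on {0..1} f1" and f2c: "continuous_on {0..1} f2"
    and f1C1: "C1_on_01 f1 f1'" and f2C1: "C1_on_01 f2 f2'"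
    and f10: "f1 0 = 0" and f21: "f2 1 = 0"
    and f1pos: "\<forall>x\<in>{0<..<1}. f1' x > 0" and f2neg: "\<forall>x\<in>{0<..<1}. f2' x < 0"
    \<comment> \<open>Assumption B: p_c' is C^1 and positive on (0,1)\<close>
    and pcC1: "C1_on_01 dpc dpc'" and pcpos: "\<forall>x\<in>{0<..<1}. dpc x > 0"
    \<comment> \<open>data of (IVP)\<close>
    and r0: "r0 > 0" and s0: "s0 \<in> {0<..<1}"
    \<comment> \<open>S solves (IVP) on [r0, \<infinity>)\<close>
    and Scont: "continuous_on {r0..} S"
    and Sinit: "S r0 = s0"
    and Sbounds: "\<forall>r\<ge>r0. 0 < S r \<and> S r < 1"
    and Sode: "\<forall>r>r0. (S has_real_derivative
        (Gfun N2 a2 \<alpha>2 (c2 * r powr (1 - real n)) * Ffun dpc f2 (S r)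
         - Gfun N1 a1 \<alpha>1 (c1 * r powr (1 - real n)) * Ffun dpc f1 (S r))) (at r)"
  shows "(\<exists>R>r0. mono_on {R<..} S \<or> antimono_on {R<..} S)
         \<and> (\<exists>s_inf\<in>{0..1}. (S \<longlongrightarrow> s_inf) at_top)"
proof -
  define u where "u = (\<lambda>r::real. r powr (1 - real n))"
  have upos: "u r > 0" if "r > 0" for r using that by (simp add: u_def)
  define D where "D = (\<lambda>r. Gfun N2 a2 \<alpha>2 (c2 * u r) * Ffun dpc f2 (S r) - Gfun N1 a1 \<alpha>1 (c1 * u r) * Ffun dpc f1 (S r))"
  have deriv: "\<forall>r>r0. (S has_real_derivative D r) (at r)" using Sode by (simp add: D_def u_def)
  have f1d: "\<forall>x\<in>{0<..<1}. (f1 has_real_derivative f1' x) (at x)" using f1C1 by (simp add: C1_on_01_def)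
  have f2d: "\<forall>x\<in>{0<..<1}. (f2 has_real_derivative f2' x) (at x)" using f2C1 by (simp add: C1_on_01_def)
  have f1p: "f1 s > 0" if "s \<in> {0<..<1}" for s
    using f_inc[OF f1c f1d f1pos, of 0 s] that f10 by auto
  have f2p: "f2 s > 0" if "s \<in> {0<..<1}" for s
    using f_dec[OF f2c f2d f2neg, of s 1] that f21 by auto
  have Srange: "S r \<in> {0<..<1}" if "r > r0" for r using Sbounds that by auto
  have F1p: "Ffun dpc f1 (S r) > 0" if "r > r0" for r
    using f1p[OF Srange[OF that]] pcpos Srange[OF that] by (simp add: Ffun_def)
  have F2p: "Ffun dpc f2 (S r) > 0" if "r > r0" for r
    using f2p[OF Srange[OF that]] pcpos Srange[OF that] by (simp add: Ffun_def)
  have Gf: "Gfun N a \<alpha> x = gpow N a \<alpha> \<bar>x\<bar> * x" for N a \<alpha> x by (simp add: Gfun_def)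
  have g1p: "gpow N1 a1 \<alpha>1 s > 0" if "s \<ge> 0" for s using gpow_pos[OF g1 that] .
  have g2p: "gpow N2 a2 \<alpha>2 s > 0" if "s \<ge> 0" for s using gpow_pos[OF g2 that] .
  have mono_part: "\<exists>R>r0. mono_on {R<..} S \<or> antimono_on {R<..} S"
  proof (cases "(c2 \<ge> 0 \<and> c1 \<le> 0) \<or> (c2 \<le> 0 \<and> c1 \<ge> 0)")
    case True
    then show ?thesis
    proof
      assume c: "c2 \<ge> 0 \<and> c1 \<le> 0"
      have "\<forall>r>r0. D r \<ge> 0"
      proof (intro allI impI)
        fix r assume r: "r > r0"
        have u: "u r > 0" using upos r r0 by auto
        have "Gfun N2 a2 \<alpha>2 (c2 * u r) \<ge> 0"
          unfolding Gf using g2p[of "\<bar>c2 * u r\<bar>"] c u by (intro mult_nonneg_nonneg) auto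
        moreover have "Gfun N1 a1 \<alpha>1 (c1 * u r) \<le> 0"
          unfolding Gf using g1p[of "\<bar>c1 * u r\<bar>"] c u mult_nonpos_nonneg[of c1 "u r"] by (intro mult_nonneg_nonpos[where b="_ * u r"]) auto
        ultimately show "D r \<ge> 0" using F1p[OF r] F2p[OF r] unfolding D_def
          by (smt (verit) mult_nonneg_nonneg mult_nonpos_nonneg)
      qed
      then have "mono_on {r0<..} S" by (rule mono_deriv[OF deriv])
      then show ?thesis by (intro exI[of _ "r0+1"]) (auto intro: monotone_on_subset)
    next
      assume c: "c2 \<le> 0 \<and> c1 \<ge> 0"
      have "\<forall>r>r0. D r \<le> 0"
      proof (intro allI impI)
        fix r assume r: "r > r0"
        have u: "u r > 0" using upos r r0 by auto
        have "Gfun N2 a2 \<alpha>2 (c2 * u r) \<le> 0"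
          unfolding Gf using g2p[of "\<bar>c2 * u r\<bar>"] c u mult_nonpos_nonneg[of c2 "u r"] by (intro mult_nonneg_nonpos[where b="_ * u r"]) auto
        moreover have "Gfun N1 a1 \<alpha>1 (c1 * u r) \<ge> 0"
          unfolding Gf using g1p[of "\<bar>c1 * u r\<bar>"] c u by (intro mult_nonneg_nonneg) auto
        ultimately show "D r \<le> 0" using F1p[OF r] F2p[OF r] unfolding D_def
          by (smt (verit) mult_nonneg_nonneg mult_nonpos_nonneg)
      qed
      then have "antimono_on {r0<..} S" by (rule antimono_deriv[OF deriv])
      then show ?thesis by (intro exI[of _ "r0+1"]) (auto intro: monotone_on_subset)
    qed
  next
    case False
    then have c12: "c1 \<noteq> 0" "c2 \<noteq> 0" "c1 / c2 > 0" by (auto simp: zero_less_divide_iff)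
    define k1 where "k1 = \<bar>c1\<bar>"
    define k2 where "k2 = \<bar>c2\<bar>"
    have k: "k1 > 0" "k2 > 0" using c12 by (auto simp: k1_def k2_def)
    define p where "p = (\<lambda>j. c1 / c2 * (if j=0 then a1 0 else a1 j * k1 powr \<alpha>1 j))"
    define e where "e = (\<lambda>j::nat. if j = 0 then 0 else \<alpha>1 j)"
    define q where "q = (\<lambda>j. if j=0 then a2 0 else a2 j * k2 powr \<alpha>2 j)"
    define d where "d = (\<lambda>j::nat. if j = 0 then 0 else \<alpha>2 j)"
    define Rat where "Rat = (\<lambda>v. (\<Sum>j\<in>{0..N1}. p j * v powr e j) / (\<Sum>k\<in>{0..N2}. q k * v powr d k))"
    have Qeq: "(\<Sum>k\<in>{0..N2}. q k * v powr d k) = gpow N2 a2 \<alpha>2 (k2 * v)" if "v > 0" for v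
      using gpow_sum[OF k(2) that, of N2 a2 \<alpha>2] by (simp add: q_def d_def)
    have Peq: "(\<Sum>j\<in>{0..N1}. p j * v powr e j) = c1 / c2 * gpow N1 a1 \<alpha>1 (k1 * v)" if "v > 0" for v
      using gpow_sum[OF k(1) that, of N1 a1 \<alpha>1]
      by (simp add: p_def e_def sum_distrib_left mult.assoc)
    have Qpos: "\<forall>v>0. (\<Sum>k\<in>{0..N2}. q k * v powr d k) > 0"
      using Qeq g2p k by auto
    have Rat_eq: "Rat v = c1 * gpow N1 a1 \<alpha>1 (k1 * v) / (c2 * gpow N2 a2 \<alpha>2 (k2 * v))" if "v > 0" for v
      using Peq[OF that] Qeq[OF that] by (simp add: Rat_def)
    obtain b where b: "b > 0" "mono_on {0<..<b} Rat \<or> antimono_on {0<..<b} Rat"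
      using ratio_eventually_mono[of "{0..N1}" "{0..N2}" q d p e] Qpos unfolding Rat_def by auto
    have "(u \<longlongrightarrow> 0) at_top" unfolding u_def using n
      by (intro tendsto_neg_powr filterlim_ident) auto
    then have "\<forall>\<^sub>F r in at_top. u r < b" using b(1) by (rule order_tendstoD)
    then obtain R1 where R1: "\<forall>r\<ge>R1. u r < b" unfolding eventually_at_top_linorder by auto
    define R where "R = max R1 r0"
    have Rr0: "R \<ge> r0" "R \<ge> R1" by (auto simp: R_def)
    have uin: "u r \<in> {0<..<b}" if "r > R" for r using R1 upos Rr0 r0 that by auto
    have uanti: "u s \<le> u r" if "R < r" "r \<le> s" for r s
      unfolding u_def using that Rr0 r0 n by (intro powr_mono2') auto
    define \<psi> where "\<psi> = (\<lambda>r. c1 * gpow N1 a1 \<alpha>1 (k1 * u r) / (c2 * gpow N2 a2 \<alpha>2 (k2 * u r)))"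
    have psiRat: "\<psi> r = Rat (u r)" if "r > R" for r
      using Rat_eq[of "u r"] uin[OF that] by (simp add: \<psi>_def)
    have psi_mono: "mono_on {R<..} \<psi> \<or> antimono_on {R<..} \<psi>"
      using b(2)
    proof
      assume m: "mono_on {0<..<b} Rat"
      have "antimono_on {R<..} \<psi>"
      proof (rule monotone_onI)
        fix r s assume "r \<in> {R<..}" "s \<in> {R<..}" "r \<le> s"
        then have "u s \<in> {0<..<b}" "u r \<in> {0<..<b}" "u s \<le> u r" using uin uanti by auto
        then have "Rat (u s) \<le> Rat (u r)" using monotone_onD[OF m] by blast
        then show "\<psi> s \<le> \<psi> r" using psiRat \<open>r \<in> {R<..}\<close> \<open>s \<in> {R<..}\<close> by auto
      qed
      then show ?thesis by blast
    next
      assume m: "antimono_on {0<..<b} Rat"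
      have "mono_on {R<..} \<psi>"
      proof (rule monotone_onI)
        fix r s assume "r \<in> {R<..}" "s \<in> {R<..}" "r \<le> s"
        then have "u s \<in> {0<..<b}" "u r \<in> {0<..<b}" "u s \<le> u r" using uin uanti by auto
        then have "Rat (u s) \<ge> Rat (u r)" using monotone_onD[OF m] by blast
        then show "\<psi> r \<le> \<psi> s" using psiRat \<open>r \<in> {R<..}\<close> \<open>s \<in> {R<..}\<close> by auto
      qed
      then show ?thesis by blast
    qed
    define \<phi> where "\<phi> = (\<lambda>s. f1 s / f2 s)"
    have phi: "strict_mono_on {0<..<1} \<phi>"
    proof (rule strict_mono_onI)
      fix x y :: real assume xy: "x \<in> {0<..<1}" "y \<in> {0<..<1}" "x < y"
      have "f1 x < f1 y" using f_inc[OF f1c f1d f1pos, of x y] xy by auto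
      moreover have "f2 y < f2 x" using f_dec[OF f2c f2d f2neg, of x y] xy by auto
      ultimately show "\<phi> x < \<phi> y" unfolding \<phi>_def
        using f1p[OF xy(1)] f2p[OF xy(2)] by (intro frac_less2) auto
    qed
    have Scont': "continuous_on {R<..} S" using Scont by (rule continuous_on_subset) (use Rr0 in auto)
    have phic: "continuous_on {0<..<1} \<phi>" unfolding \<phi>_def
      using f2p by (intro continuous_intros continuous_on_subset[OF f1c] continuous_on_subset[OF f2c]) force+
    have phiS: "continuous_on {R<..} (\<lambda>r. \<phi> (S r))"
      using Srange Rr0 by (intro continuous_on_compose2[OF phic Scont']) auto
    have uc: "continuous_on {R<..} u" unfolding u_def
      using Rr0 r0 by (intro continuous_intros) auto
    have gc: "continuous_on {R<..} (\<lambda>r. gpow N a \<alpha> (k * u r))" if "k > 0" for N a \<alpha> k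
      unfolding gpow_def using that
      by (intro continuous_intros uc) (auto dest!: uin)
    have den: "\<forall>r\<in>{R<..}. c2 * gpow N2 a2 \<alpha>2 (k2 * u r) \<noteq> 0"
    proof
      fix r assume "r \<in> {R<..}"
      then have "u r > 0" using uin by auto
      then have "gpow N2 a2 \<alpha>2 (k2 * u r) > 0" using g2p k by simp
      then show "c2 * gpow N2 a2 \<alpha>2 (k2 * u r) \<noteq> 0" using c12 by simp
    qed
    have psic: "continuous_on {R<..} \<psi>" unfolding \<psi>_def
      by (intro continuous_on_divide continuous_on_mult continuous_on_const gc k den)
    have hc: "continuous_on {R<..} (\<lambda>r. \<phi> (S r) - \<psi> r)"
      by (intro continuous_intros phiS psic)
    have sg: "\<forall>r>R. sgn (D r) = sgn c2 * sgn (\<phi> (S r) - \<psi> r)"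
    proof (intro allI impI)
      fix r assume rR: "r > R"
      then have r: "r > r0" using Rr0 by auto
      define v where "v = u r"
      have v: "v > 0" using uin[OF rR] by (simp add: v_def)
      define s where "s = S r"
      have s: "s \<in> {0<..<1}" using Srange[OF r] by (simp add: s_def)
      define P where "P = dpc s"
      define A where "A = f1 s"
      define B where "B = f2 s"
      define G1 where "G1 = gpow N1 a1 \<alpha>1 (k1 * v)"
      define G2 where "G2 = gpow N2 a2 \<alpha>2 (k2 * v)"
      have pos: "P > 0" "A > 0" "B > 0" "G1 > 0" "G2 > 0"
        using pcpos s f1p f2p g1p g2p k v by (auto simp: P_def A_def B_def G1_def G2_def)
      have ab1: "\<bar>c1 * v\<bar> = k1 * v" "\<bar>c2 * v\<bar> = k2 * v" using v by (auto simp: k1_def k2_def abs_mult)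
      have "D r = (G2 * v / (P * A)) * c2 * (A / B - c1 * G1 / (c2 * G2))"
        unfolding D_def Gf Ffun_def
        using pos c12 by (simp add: v_def[symmetric] s_def[symmetric] ab1 G1_def[symmetric] G2_def[symmetric]
            P_def[symmetric] A_def[symmetric] B_def[symmetric]) (simp add: field_simps)
      moreover have "\<phi> (S r) - \<psi> r = A / B - c1 * G1 / (c2 * G2)"
        by (simp add: \<phi>_def \<psi>_def A_def B_def s_def G1_def G2_def v_def)
      moreover have "G2 * v / (P * A) > 0" using pos v by auto
      moreover have "sgn (G2 * v / (P * A) * c2 * (A / B - c1 * G1 / (c2 * G2)))
          = sgn (G2 * v / (P * A)) * sgn c2 * sgn (A / B - c1 * G1 / (c2 * G2))"
        by (simp only: sgn_mult)
      ultimately show "sgn (D r) = sgn c2 * sgn (\<phi> (S r) - \<psi> r)"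
        by (metis mult.left_neutral sgn_pos)
    qed
    have sig: "sgn c2 = 1 \<or> sgn c2 = -1" using c12 by (auto simp: sgn_if)
    have derivR: "\<forall>r>R. (S has_real_derivative D r) (at r)" using deriv Rr0 by auto
    have SD: "\<forall>r>R. S r \<in> {0<..<1}" using Srange Rr0 by auto
    from dyn[OF derivR phi SD hc psi_mono sg sig]
    obtain R' where R': "R' > R" "mono_on {R'<..} S \<or> antimono_on {R'<..} S" by blast
    have "R' > r0" using R'(1) Rr0 by linarith
    then show ?thesis using R'(2) by blast
  qed
  then obtain R where R: "R > r0" "mono_on {R<..} S \<or> antimono_on {R<..} S" by auto
  have bnd: "\<forall>r>R. 0 \<le> S r \<and> S r \<le> 1"
  proof (intro allI impI)
    fix r assume "r > R"
    then have "r \<ge> r0" using R(1) by auto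
    then show "0 \<le> S r \<and> S r \<le> 1" using Sbounds by (simp add: less_imp_le)
  qed
  have "\<exists>L\<in>{0..1}. (S \<longlongrightarrow> L) at_top"
    using R(2) mono_lim[OF _ bnd] antimono_lim[OF _ bnd] by (elim disjE) auto
  moreover have "\<exists>R>r0. mono_on {R<..} S \<or> antimono_on {R<..} S" using R by blast
  ultimately show ?thesis by (intro conjI)
qed

end
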